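(* Let $f:\mathbb{R}^n\to\mathbb{R}$ be differentiable and pseudo-convex, with $\nabla f$ $L$-Lipschitz continuous ($L>0$), and assume the stationary set $X^*$ is non-empty. Let $0<h<\frac{1}{L}$ and $\beta\in\left(\frac{1-\sqrt{1-h^2L^2}}{h^2L^2},1\right]$. Then the sequence $\{x^k\}$ generated by Algorithm 1 from any $x^0\in\mathbb{R}^n$ converges to a point of $X^*$.
   Context: A differentiable $f$ is pseudo-convex if $\nabla f$ is pseudo-monotone, i.e. for all $x,y$, $\langle \nabla f(x),y-x\rangle\ge 0$ implies $\langle \nabla f(y),y-x\rangle\ge0$. The stationary set is $X^*=\{x\in\mathbb{R}^n:\nabla f(x)=0\}$. Algorithm 1: given $x^0$, for $k=0,1,2,\dots$ set $z^k=x^k-h\nabla f(x^k)$ and $x^{k+1}=x^k-h\big(\nabla f(x^k)-\beta(\nabla f(x^k)-\nabla f(z^k))\big)$. *)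

theory Defs
  imports "HOL-Analysis.Analysis"
begin

definition pseudo_monotone :: "('a::real_inner \<Rightarrow> 'a) \<Rightarrow> bool" where
  "pseudo_monotone F \<longleftrightarrow>
     (\<forall>x y. inner (F x) (y - x) \<ge> 0 \<longrightarrow> inner (F y) (y - x) \<ge> 0)"

text \<open>A differentiable f with gradient g is pseudo-convex iff g is pseudo-monotone.\<close>
definition pseudo_convex :: "('a::real_inner \<Rightarrow> real) \<Rightarrow> ('a \<Rightarrow> 'a) \<Rightarrow> bool" where
  "pseudo_convex f g \<longleftrightarrow> pseudo_monotone g"

definition stationary_set :: "('a::real_inner \<Rightarrow> 'a) \<Rightarrow> 'a set" where
  "stationary_set g = {x. g x = 0}"

definition alg1_step :: "('a::real_vector \<Rightarrow> 'a) \<Rightarrow> real \<Rightarrow> real \<Rightarrow> 'a \<Rightarrow> 'a" where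
  "alg1_step g h \<beta> x =
     (let z = x - h *\<^sub>R g x in x - h *\<^sub>R (g x - \<beta> *\<^sub>R (g x - g z)))"

primrec alg1_seq :: "('a::real_vector \<Rightarrow> 'a) \<Rightarrow> real \<Rightarrow> real \<Rightarrow> 'a \<Rightarrow> nat \<Rightarrow> 'a" where
  "alg1_seq g h \<beta> x0 0 = x0"
| "alg1_seq g h \<beta> x0 (Suc k) = alg1_step g h \<beta> (alg1_seq g h \<beta> x0 k)"

end

theory Submission
  imports Defs
begin

lemma norm_sq_minus: fixes u w :: "'a::real_inner"
  shows "(norm (u - c *\<^sub>R w))\<^sup>2 = (norm u)\<^sup>2 - 2*c*inner w u + c\<^sup>2*(norm w)\<^sup>2"
  unfolding power2_norm_eq_inner inner_diff_left inner_diff_right inner_scaleR_left inner_scaleR_right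
  by (simp add: inner_commute power2_eq_square algebra_simps)

lemma norm_sq_plus: fixes u w :: "'a::real_inner"
  shows "(norm (u + c *\<^sub>R w))\<^sup>2 = (norm u)\<^sup>2 + 2*c*inner u w + c\<^sup>2*(norm w)\<^sup>2"
  unfolding power2_norm_eq_inner inner_add_left inner_add_right inner_scaleR_left inner_scaleR_right
  by (simp add: inner_commute power2_eq_square algebra_simps)

lemma real_ineq: fixes U A D N X Dn h \<beta> L n :: real
  assumes k1: "2*h*(1-\<beta>)*A \<ge> 0" and k2: "2*h*\<beta>*(A + D) \<ge> 2*h*\<beta>*(h*(N + X))"
   and k3: "h\<^sup>2*\<beta>\<^sup>2*Dn \<le> h\<^sup>2*\<beta>\<^sup>2*(L*h*n)\<^sup>2" and N: "N = n\<^sup>2"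
  shows "U - 2*h*(A + \<beta>*D) + h\<^sup>2*(N + 2*\<beta>*X + \<beta>\<^sup>2*Dn) \<le> U - h\<^sup>2 * (2*\<beta> - 1 - \<beta>\<^sup>2 * h\<^sup>2 * L\<^sup>2) * n\<^sup>2"
proof -
  have e: "U - 2*h*(A + \<beta>*D) + h\<^sup>2*(N + 2*\<beta>*X + \<beta>\<^sup>2*Dn) = U - 2*h*(1-\<beta>)*A - 2*h*\<beta>*(A + D) + h\<^sup>2*N + 2*h*\<beta>*(h*X) + h\<^sup>2*\<beta>\<^sup>2*Dn"
    by (simp add: algebra_simps power2_eq_square)
  have e2: "U - h\<^sup>2 * (2*\<beta> - 1 - \<beta>\<^sup>2 * h\<^sup>2 * L\<^sup>2) * n\<^sup>2 = U - 2*h*\<beta>*(h*(N + X)) + h\<^sup>2*N + 2*h*\<beta>*(h*X) + h\<^sup>2*\<beta>\<^sup>2*(L*h*n)\<^sup>2"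
    by (simp add: N algebra_simps power2_eq_square)
  show ?thesis unfolding e e2 using k1 k2 k3 by linarith
qed

lemma step_ineq:
  fixes u a b :: "'a::real_inner"
  assumes au: "inner a u \<ge> 0" and bu: "inner b u \<ge> h * inner b a"
    and d: "norm (b - a) \<le> L * h * norm a"
    and h: "h > 0" and L: "L > 0" and b0: "0 \<le> \<beta>" and b1: "\<beta> \<le> 1"
  shows "(norm (u - h *\<^sub>R ((1 - \<beta>) *\<^sub>R a + \<beta> *\<^sub>R b)))\<^sup>2
     \<le> (norm u)\<^sup>2 - h\<^sup>2 * (2*\<beta> - 1 - \<beta>\<^sup>2 * h\<^sup>2 * L\<^sup>2) * (norm a)\<^sup>2"
proof -
  define dd where "dd = b - a"
  have bdef: "b = a + dd" by (simp add: dd_def)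
  have w: "(1 - \<beta>) *\<^sub>R a + \<beta> *\<^sub>R b = a + \<beta> *\<^sub>R dd" by (simp add: bdef algebra_simps)
  have i1: "inner (a + \<beta> *\<^sub>R dd) u = inner a u + \<beta> * inner dd u"
    by (simp add: inner_add_left)
  have e1: "(norm (u - h *\<^sub>R (a + \<beta> *\<^sub>R dd)))\<^sup>2 = (norm u)\<^sup>2 - 2*h*(inner a u + \<beta> * inner dd u)
      + h\<^sup>2 * ((norm a)\<^sup>2 + 2*\<beta>*inner a dd + \<beta>\<^sup>2 * (norm dd)\<^sup>2)"
    unfolding norm_sq_minus norm_sq_plus i1 by simp
  have ba: "inner b a = (norm a)\<^sup>2 + inner a dd"
    by (simp add: bdef inner_add_left inner_add_right power2_norm_eq_inner inner_commute)
  have bu': "inner a u + inner dd u \<ge> h * ((norm a)\<^sup>2 + inner a dd)"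
    using bu unfolding ba by (simp add: bdef inner_add_left)
  have k1: "2*h*(1-\<beta>)*inner a u \<ge> 0" using au h b1 by simp
  have k2: "2*h*\<beta>*(inner a u + inner dd u) \<ge> 2*h*\<beta>*(h * ((norm a)\<^sup>2 + inner a dd))"
    using bu' h b0 by (simp add: mult_left_mono)
  have dn: "(norm dd)\<^sup>2 \<le> (L*h*norm a)\<^sup>2" using d by (simp add: dd_def power_mono)
  have k3: "h\<^sup>2*\<beta>\<^sup>2*(norm dd)\<^sup>2 \<le> h\<^sup>2*\<beta>\<^sup>2*(L*h*norm a)\<^sup>2"
    using dn by (simp add: mult_left_mono)
  show ?thesis unfolding w e1
    by (rule real_ineq[OF k1 k2 k3 refl])
qed

lemma quad:
  fixes t \<beta> :: real
  assumes "0 < t" "t < 1" "(1 - sqrt (1 - t)) / t < \<beta>" "\<beta> \<le> 1"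
  shows "2*\<beta> - 1 - \<beta>\<^sup>2 * t > 0"
proof -
  define s where "s = sqrt (1 - t)"
  have s2: "s\<^sup>2 = 1 - t" using assms by (simp add: s_def)
  have s0: "0 < s" "s < 1" using assms by (auto simp: s_def real_sqrt_lt_1_iff)
  have r1: "1 - s < t * \<beta>" using assms(3) assms(1) unfolding s_def[symmetric] by (simp add: field_simps)
  have r2: "t * \<beta> < 1 + s"
  proof -
    have "t*\<beta> \<le> t*1" using assms(4) assms(1) by (intro mult_left_mono) auto
    then show ?thesis using s0 assms(2) by simp
  qed
  have "(t*\<beta> - (1 - s)) * ((1 + s) - t*\<beta>) > 0" using r1 r2 by simp
  then have "t * (2*\<beta> - 1 - \<beta>\<^sup>2 * t) > 0" using s2 by (simp add: algebra_simps power2_eq_square)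
  then show ?thesis using assms(1) by (simp add: zero_less_mult_iff)
qed

theorem theorem1:
  fixes f :: "real ^ 'n \<Rightarrow> real" and g :: "real ^ 'n \<Rightarrow> real ^ 'n"
    and L h \<beta> :: real and x0 :: "real ^ 'n"
  assumes grad: "\<And>x. (f has_derivative (\<lambda>v. inner (g x) v)) (at x)"
    and pc: "pseudo_convex f g"
    and Lpos: "L > 0"
    and Lip: "\<And>x y. norm (g x - g y) \<le> L * norm (x - y)"
    and nonempty: "stationary_set g \<noteq> {}"
    and hpos: "0 < h" and hL: "h < 1 / L"
    and blo: "(1 - sqrt (1 - h\<^sup>2 * L\<^sup>2)) / (h\<^sup>2 * L\<^sup>2) < \<beta>"
    and bhi: "\<beta> \<le> 1"
  shows "\<exists>xs \<in> stationary_set g. alg1_seq g h \<beta> x0 \<longlonglongrightarrow> xs"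
proof -
  define x where "x = alg1_seq g h \<beta> x0"
  obtain p0 where p0: "g p0 = 0" using nonempty unfolding stationary_set_def by auto
  have key: "inner (g y) (y - p) \<ge> 0" if "g p = 0" for y p
    using pc that unfolding pseudo_convex_def pseudo_monotone_def by (metis inner_zero_left order_refl)
  have hL1: "h * L < 1" using hL Lpos by (simp add: field_simps)
  have t0: "0 < h\<^sup>2 * L\<^sup>2" using hpos Lpos by simp
  have t1: "h\<^sup>2 * L\<^sup>2 < 1"
  proof -
    have "(h*L)\<^sup>2 < 1" using hL1 hpos Lpos by (simp add: power_less_one_iff abs_if)
    then show ?thesis by (simp add: power_mult_distrib)
  qed
  have q: "2*\<beta> - 1 - \<beta>\<^sup>2 * (h\<^sup>2 * L\<^sup>2) > 0" by (rule quad[OF t0 t1 blo bhi])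
  define c where "c = h\<^sup>2 * (2*\<beta> - 1 - \<beta>\<^sup>2 * h\<^sup>2 * L\<^sup>2)"
  have c0: "c > 0" unfolding c_def using q hpos by (simp add: mult.assoc)
  have b0: "\<beta> \<ge> 0"
  proof -
    have "\<beta>\<^sup>2 * (h\<^sup>2 * L\<^sup>2) \<ge> 0" by simp
    then show ?thesis using q by linarith
  qed
  have fejer: "(norm (x (Suc k) - p))\<^sup>2 \<le> (norm (x k - p))\<^sup>2 - c * (norm (g (x k)))\<^sup>2"
    if gp: "g p = 0" for k p
  proof -
    define u where "u = x k - p"
    define a where "a = g (x k)"
    define z where "z = x k - h *\<^sub>R a"
    define b where "b = g z"
    have au: "inner a u \<ge> 0" unfolding a_def u_def using key[OF gp] .
    have zb: "inner b (z - p) \<ge> 0" unfolding b_def using key[OF gp] .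
    have "z - p = u - h *\<^sub>R a" by (simp add: z_def u_def)
    then have bu: "inner b u \<ge> h * inner b a" using zb by (simp add: inner_diff_right)
    have d: "norm (b - a) \<le> L * h * norm a"
    proof -
      have "norm (b - a) \<le> L * norm (z - x k)" unfolding b_def a_def by (rule Lip)
      also have "norm (z - x k) = h * norm a" using hpos by (simp add: z_def)
      finally show ?thesis by (simp add: mult.assoc)
    qed
    have xs: "x (Suc k) - p = u - h *\<^sub>R ((1 - \<beta>) *\<^sub>R a + \<beta> *\<^sub>R b)"
    proof -
      have "x (Suc k) = alg1_step g h \<beta> (x k)" by (simp add: x_def)
      then show ?thesis
        by (simp add: alg1_step_def Let_def u_def a_def b_def z_def algebra_simps)
    qed
    show ?thesis unfolding xs using step_ineq[OF au bu d hpos Lpos b0 bhi]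
      by (simp add: c_def u_def a_def mult.assoc)
  qed
  have mono: "norm (x (Suc k) - p) \<le> norm (x k - p)" if gp: "g p = 0" for k p
  proof -
    have "(norm (x (Suc k) - p))\<^sup>2 \<le> (norm (x k - p))\<^sup>2"
      using fejer[OF gp, of k] c0 by (smt (verit) mult_nonneg_nonneg zero_le_power2)
    then show ?thesis by (rule power2_le_imp_le) simp
  qed
  have monoN: "norm (x n - p) \<le> norm (x m - p)" if gp: "g p = 0" and "m \<le> n" for m n p
    using lift_Suc_antimono_le[of "\<lambda>k. norm (x k - p)", OF mono[OF gp] that(2)] .
  have bnd: "bounded (range x)"
    unfolding bounded_def
  proof (intro exI ballI)
    fix y assume "y \<in> range x"
    then obtain k where "y = x k" by auto
    then show "dist p0 y \<le> norm (x 0 - p0)"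
      using monoN[OF p0, of 0 k] by (simp add: dist_norm norm_minus_commute)
  qed
  have psum: "(\<Sum>k<n. c * (norm (g (x k)))\<^sup>2) \<le> (norm (x 0 - p0))\<^sup>2 - (norm (x n - p0))\<^sup>2" for n
  proof (induction n)
    case 0 then show ?case by simp
  next
    case (Suc n)
    then show ?case using fejer[OF p0, of n] by simp
  qed
  have summ: "summable (\<lambda>k. c * (norm (g (x k)))\<^sup>2)"
  proof (rule summableI_nonneg_bounded)
    show "0 \<le> c * (norm (g (x n)))\<^sup>2" for n using c0 by simp
    show "(\<Sum>k<n. c * (norm (g (x k)))\<^sup>2) \<le> (norm (x 0 - p0))\<^sup>2" for n
      using psum[of n] by (smt (verit) zero_le_power2)
  qed
  have "(\<lambda>k. c * (norm (g (x k)))\<^sup>2) \<longlonglongrightarrow> 0" by (rule summable_LIMSEQ_zero[OF summ])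
  then have "(\<lambda>k. (1/c) * (c * (norm (g (x k)))\<^sup>2)) \<longlonglongrightarrow> (1/c) * 0"
    by (intro tendsto_mult) auto
  then have "(\<lambda>k. (norm (g (x k)))\<^sup>2) \<longlonglongrightarrow> 0" using c0 by simp
  then have "(\<lambda>k. sqrt ((norm (g (x k)))\<^sup>2)) \<longlonglongrightarrow> sqrt 0" by (rule tendsto_real_sqrt)
  then have "(\<lambda>k. norm (g (x k))) \<longlonglongrightarrow> 0" by simp
  then have g0: "(\<lambda>k. g (x k)) \<longlonglongrightarrow> 0" by (simp add: tendsto_norm_zero_iff)
  obtain l r where r: "strict_mono r" and xl: "(x \<circ> r) \<longlonglongrightarrow> l"
    using bounded_imp_convergent_subsequence[OF bnd] by blast
  have "(\<lambda>k. g (x (r k))) \<longlonglongrightarrow> 0"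
    using LIMSEQ_subseq_LIMSEQ[OF g0 r] by (simp add: comp_def)
  moreover have "(\<lambda>k. g (x (r k))) \<longlonglongrightarrow> g l"
  proof -
    have "(\<lambda>k. x (r k) - l) \<longlonglongrightarrow> 0" using xl by (simp add: comp_def LIM_zero)
    then have "(\<lambda>k. norm (x (r k) - l)) \<longlonglongrightarrow> 0" by (simp add: tendsto_norm_zero_iff)
    then have "(\<lambda>k. L * norm (x (r k) - l)) \<longlonglongrightarrow> 0" by (rule tendsto_mult_right_zero)
    then have "(\<lambda>k. g (x (r k)) - g l) \<longlonglongrightarrow> 0"
      by (rule Lim_null_comparison[rotated]) (simp add: Lip)
    then show ?thesis by (rule LIM_zero_cancel)
  qed
  ultimately have gl: "g l = 0" using LIMSEQ_unique by metis
  have "x \<longlonglongrightarrow> l"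
  proof (rule LIMSEQ_I)
    fix e :: real assume e: "0 < e"
    obtain N where N: "\<And>n. n \<ge> N \<Longrightarrow> norm ((x \<circ> r) n - l) < e"
      using LIMSEQ_D[OF xl e] by blast
    show "\<exists>no. \<forall>n\<ge>no. norm (x n - l) < e"
    proof (intro exI allI impI)
      fix n assume "r N \<le> n"
      then have "norm (x n - l) \<le> norm (x (r N) - l)" by (rule monoN[OF gl])
      also have "\<dots> < e" using N[of N] by simp
      finally show "norm (x n - l) < e" .
    qed
  qed
  then show ?thesis using gl unfolding x_def stationary_set_def by auto
qed

end
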